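(* Let $\mathcal{A}$ and $\mathcal{B}$ be semi-classical test spaces with outcome sets $X,Y$, and let $\omega$ be a probability weight on $\mathcal{A}\times\mathcal{B}$. If $\omega$ is both non-signaling and dispersion-free, then $\omega=\alpha\otimes\beta$, i.e. $\omega(x,y)=\alpha(x)\beta(y)$ for all $x\in X,y\in Y$, where $\alpha$ and $\beta$ are dispersion-free probability weights on $\mathcal{A}$ and $\mathcal{B}$ respectively.
   Context: A test space is an irredundant collection of nonempty sets (tests); it is semi-classical if distinct tests are disjoint. A probability weight is a function into $[0,1]$ summing to $1$ over each test; it is dispersion-free if it takes only the values $0$ and $1$. $\mathcal{A}\times\mathcal{B}=\{E\times F:E\in\mathcal{A},F\in\mathcal{B}\}$. A probability weight $\omega$ on $\mathcal{A}\times\mathcal{B}$ is non-signaling if $\sum_{x\in E}\omega(x,y)$ is independent of $E\in\mathcal{A}$ for each $y$ and $\sum_{y\in F}\omega(x,y)$ is independent of $F\in\mathcal{B}$ for each $x$. *)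

theory Defs
  imports "HOL-Analysis.Analysis"
begin

definition test_space :: "'a set set \<Rightarrow> bool" where
  "test_space \<A> \<longleftrightarrow> (\<forall>E\<in>\<A>. E \<noteq> {}) \<and> (\<forall>E\<in>\<A>. \<forall>F\<in>\<A>. E \<subseteq> F \<longrightarrow> E = F)"

definition outcomes :: "'a set set \<Rightarrow> 'a set" where
  "outcomes \<A> = \<Union>\<A>"

definition semi_classical :: "'a set set \<Rightarrow> bool" where
  "semi_classical \<A> \<longleftrightarrow> test_space \<A> \<and> (\<forall>E\<in>\<A>. \<forall>F\<in>\<A>. E \<noteq> F \<longrightarrow> E \<inter> F = {})"

definition prob_weight :: "'a set set \<Rightarrow> ('a \<Rightarrow> real) \<Rightarrow> bool" where
  "prob_weight \<A> w \<longleftrightarrow> (\<forall>x\<in>outcomes \<A>. 0 \<le> w x \<and> w x \<le> 1) \<and> (\<forall>E\<in>\<A>. (w has_sum 1) E)"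

definition dispersion_free :: "'a set set \<Rightarrow> ('a \<Rightarrow> real) \<Rightarrow> bool" where
  "dispersion_free \<A> w \<longleftrightarrow> prob_weight \<A> w \<and> (\<forall>x\<in>outcomes \<A>. w x = 0 \<or> w x = 1)"

definition prod_ts :: "'a set set \<Rightarrow> 'b set set \<Rightarrow> ('a \<times> 'b) set set" where
  "prod_ts \<A> \<B> = {E \<times> F | E F. E \<in> \<A> \<and> F \<in> \<B>}"

definition non_signaling :: "'a set set \<Rightarrow> 'b set set \<Rightarrow> ('a \<times> 'b \<Rightarrow> real) \<Rightarrow> bool" where
  "non_signaling \<A> \<B> \<omega> \<longleftrightarrow>
     (\<forall>y\<in>outcomes \<B>. \<forall>E\<in>\<A>. \<forall>E'\<in>\<A>.
        (\<Sum>\<^sub>\<infinity>x\<in>E. \<omega> (x, y)) = (\<Sum>\<^sub>\<infinity>x\<in>E'. \<omega> (x, y))) \<and>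
     (\<forall>x\<in>outcomes \<A>. \<forall>F\<in>\<B>. \<forall>F'\<in>\<B>.
        (\<Sum>\<^sub>\<infinity>y\<in>F. \<omega> (x, y)) = (\<Sum>\<^sub>\<infinity>y\<in>F'. \<omega> (x, y)))"

end

theory Submission
  imports Defs
begin

lemma L2:
  fixes g :: "'c \<Rightarrow> real"
  assumes "s0 \<in> S" "\<And>s. s \<in> S \<Longrightarrow> s \<noteq> s0 \<Longrightarrow> g s = 0"
  shows "(g has_sum g s0) S"
proof -
  have "(g has_sum sum g {s0}) {s0}" by (rule has_sum_finite) simp
  then have "(g has_sum g s0) {s0}" by simp
  then show ?thesis
    by (rule has_sum_cong_neutral[THEN iffD1, rotated -1]) (use assms in auto)
qed

lemma L1:
  fixes f :: "'c \<Rightarrow> real"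
  assumes "(f has_sum 1) S" "\<forall>s\<in>S. f s = 0 \<or> f s = 1"
  shows "\<exists>s0\<in>S. f s0 = 1 \<and> (\<forall>s\<in>S. s \<noteq> s0 \<longrightarrow> f s = 0)"
proof (rule ccontr)
  assume H: "\<not> ?thesis"
  show False
  proof (cases "\<exists>s0\<in>S. f s0 = 1")
    case True
    then obtain a where a: "a \<in> S" "f a = 1" by blast
    with H assms(2) obtain b where b: "b \<in> S" "b \<noteq> a" "f b = 1" by blast
    have "(f has_sum sum f {a,b}) {a,b}" by (rule has_sum_finite) simp
    then have "sum f {a,b} \<le> 1"
      by (rule has_sum_mono_neutral[OF _ assms(1)]) (use a b assms(2) in force)+
    with a b show False by simp
  next
    case False
    then have "(f has_sum 0) S" using assms(2) by (intro has_sum_0) blast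
    with assms(1) have "(1::real) = 0" using has_sum_unique by blast
    then show False by simp
  qed
qed

lemma L0:
  assumes "semi_classical \<A>"
  shows "\<exists>\<alpha>. dispersion_free \<A> \<alpha>"
proof -
  define c where "c E = (SOME x. x \<in> E)" for E :: "'a set"
  have ne: "\<And>E. E \<in> \<A> \<Longrightarrow> E \<noteq> {}" using assms unfolding semi_classical_def test_space_def by blast
  have cE: "\<And>E. E \<in> \<A> \<Longrightarrow> c E \<in> E" unfolding c_def using ne by (simp add: some_in_eq)
  have dj: "\<And>E F. E \<in> \<A> \<Longrightarrow> F \<in> \<A> \<Longrightarrow> E \<noteq> F \<Longrightarrow> E \<inter> F = {}"
    using assms unfolding semi_classical_def by blast
  define \<alpha> where "\<alpha> x = (if \<exists>E\<in>\<A>. x = c E then 1 else 0::real)" for x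
  have "(\<alpha> has_sum 1) E" if E: "E \<in> \<A>" for E
  proof -
    have "(\<alpha> has_sum \<alpha> (c E)) E"
    proof (rule L2[OF cE[OF E]])
      fix s assume s: "s \<in> E" "s \<noteq> c E"
      have "\<not> (\<exists>E'\<in>\<A>. s = c E')"
      proof
        assume "\<exists>E'\<in>\<A>. s = c E'"
        then obtain E' where "E' \<in> \<A>" "s = c E'" by blast
        with cE s E dj show False by blast
      qed
      then show "\<alpha> s = 0" unfolding \<alpha>_def by simp
    qed
    moreover have "\<alpha> (c E) = 1" unfolding \<alpha>_def using E by auto
    ultimately show ?thesis by simp
  qed
  then have "dispersion_free \<A> \<alpha>"
    unfolding dispersion_free_def prob_weight_def \<alpha>_def by auto
  then show ?thesis by blast
qed

theorem lemma3p7: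
  fixes \<A> :: "'a set set" and \<B> :: "'b set set" and \<omega> :: "'a \<times> 'b \<Rightarrow> real"
  assumes "semi_classical \<A>" and "semi_classical \<B>"
    and "prob_weight (prod_ts \<A> \<B>) \<omega>"
    and "non_signaling \<A> \<B> \<omega>"
    and "dispersion_free (prod_ts \<A> \<B>) \<omega>"
  shows "\<exists>\<alpha> \<beta>. dispersion_free \<A> \<alpha> \<and> dispersion_free \<B> \<beta> \<and>
           (\<forall>x\<in>outcomes \<A>. \<forall>y\<in>outcomes \<B>. \<omega> (x, y) = \<alpha> x * \<beta> y)"
proof (cases "\<A> = {} \<or> \<B> = {}")
  case True
  obtain \<alpha> where "dispersion_free \<A> \<alpha>" using L0[OF assms(1)] by blast
  moreover obtain \<beta> where "dispersion_free \<B> \<beta>" using L0[OF assms(2)] by blast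
  ultimately show ?thesis using True unfolding outcomes_def by auto
next
  case False
  then obtain E0 F0 where E0: "E0 \<in> \<A>" and F0: "F0 \<in> \<B>" by blast
  have K: "\<exists>a\<in>E. \<exists>b\<in>F. \<forall>x\<in>E. \<forall>y\<in>F. \<omega> (x,y) = (if x = a \<and> y = b then 1 else 0)"
    if E: "E \<in> \<A>" and F: "F \<in> \<B>" for E F
  proof -
    have T: "E \<times> F \<in> prod_ts \<A> \<B>" unfolding prod_ts_def using E F by blast
    then have hs: "(\<omega> has_sum 1) (E \<times> F)" using assms(3) unfolding prob_weight_def by blast
    have "\<forall>s\<in>E \<times> F. \<omega> s = 0 \<or> \<omega> s = 1"
      using assms(5) T unfolding dispersion_free_def outcomes_def by blast
    from L1[OF hs this] obtain s0 where s0: "s0 \<in> E \<times> F" "\<omega> s0 = 1"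
      "\<forall>s\<in>E \<times> F. s \<noteq> s0 \<longrightarrow> \<omega> s = 0" by blast
    obtain a b where "s0 = (a,b)" by force
    with s0 show ?thesis by (intro bexI[of _ a] bexI[of _ b]) auto
  qed
  define h where "h x F = (\<exists>y\<in>F. \<omega> (x,y) = 1)" for x F
  define h' where "h' y E = (\<exists>x\<in>E. \<omega> (x,y) = 1)" for y E
  have C1: "(\<Sum>\<^sub>\<infinity>y\<in>F. \<omega> (x, y)) = (if h x F then 1 else 0)"
    if E: "E \<in> \<A>" and x: "x \<in> E" and F: "F \<in> \<B>" for x E F
  proof -
    obtain a b where ab: "a \<in> E" "b \<in> F" "\<forall>x\<in>E. \<forall>y\<in>F. \<omega> (x,y) = (if x = a \<and> y = b then 1 else 0)"
      using K[OF E F] by blast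
    show ?thesis
    proof (cases "x = a")
      case True
      have "((\<lambda>y. \<omega> (x,y)) has_sum \<omega> (x,b)) F"
        by (rule L2) (use ab x True in auto)
      moreover have "h x F" unfolding h_def using ab x True by auto
      ultimately show ?thesis using ab x True by (simp add: infsumI)
    next
      case False
      have "((\<lambda>y. \<omega> (x,y)) has_sum 0) F"
        by (rule has_sum_0) (use ab x False in auto)
      moreover have "\<not> h x F" unfolding h_def using ab x False by auto
      ultimately show ?thesis by (simp add: infsumI)
    qed
  qed
  have C2: "(\<Sum>\<^sub>\<infinity>x\<in>E. \<omega> (x, y)) = (if h' y E then 1 else 0)"
    if E: "E \<in> \<A>" and y: "y \<in> F" and F: "F \<in> \<B>" for y E F
  proof -
    obtain a b where ab: "a \<in> E" "b \<in> F" "\<forall>x\<in>E. \<forall>y\<in>F. \<omega> (x,y) = (if x = a \<and> y = b then 1 else 0)"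
      using K[OF E F] by blast
    show ?thesis
    proof (cases "y = b")
      case True
      have "((\<lambda>x. \<omega> (x,y)) has_sum \<omega> (a,y)) E"
        by (rule L2) (use ab y True in auto)
      moreover have "h' y E" unfolding h'_def using ab y True by auto
      ultimately show ?thesis using ab y True by (simp add: infsumI)
    next
      case False
      have "((\<lambda>x. \<omega> (x,y)) has_sum 0) E"
        by (rule has_sum_0) (use ab y False in auto)
      moreover have "\<not> h' y E" unfolding h'_def using ab y False by auto
      ultimately show ?thesis by (simp add: infsumI)
    qed
  qed
  have Hx: "h x F \<longleftrightarrow> h x F0" if E: "E \<in> \<A>" and x: "x \<in> E" and F: "F \<in> \<B>" for x E F
  proof -
    have "x \<in> outcomes \<A>" unfolding outcomes_def using E x by blast
    then have "(\<Sum>\<^sub>\<infinity>y\<in>F. \<omega> (x, y)) = (\<Sum>\<^sub>\<infinity>y\<in>F0. \<omega> (x, y))"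
      using assms(4) F F0 unfolding non_signaling_def by blast
    then show ?thesis using C1[OF E x F] C1[OF E x F0] by (auto split: if_splits)
  qed
  have Hy: "h' y E \<longleftrightarrow> h' y E0" if E: "E \<in> \<A>" and y: "y \<in> F" and F: "F \<in> \<B>" for y E F
  proof -
    have "y \<in> outcomes \<B>" unfolding outcomes_def using F y by blast
    then have "(\<Sum>\<^sub>\<infinity>x\<in>E. \<omega> (x, y)) = (\<Sum>\<^sub>\<infinity>x\<in>E0. \<omega> (x, y))"
      using assms(4) E E0 unfolding non_signaling_def by blast
    then show ?thesis using C2[OF E y F] C2[OF E0 y F] by (auto split: if_splits)
  qed
  define \<alpha> where "\<alpha> x = (if h x F0 then 1 else 0::real)" for x
  define \<beta> where "\<beta> y = (if h' y E0 then 1 else 0::real)" for y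
  have hK: "h x F \<longleftrightarrow> x = a" "h' y E \<longleftrightarrow> y = b"
    if "E \<in> \<A>" "F \<in> \<B>" "a \<in> E" "b \<in> F" "x \<in> E" "y \<in> F"
      "\<forall>x\<in>E. \<forall>y\<in>F. \<omega> (x,y) = (if x = a \<and> y = b then 1 else 0)" for E F a b x y
    using that unfolding h_def h'_def by auto
  have "(\<alpha> has_sum 1) E" if E: "E \<in> \<A>" for E
  proof -
    obtain a b where ab: "a \<in> E" "b \<in> F0" "\<forall>x\<in>E. \<forall>y\<in>F0. \<omega> (x,y) = (if x = a \<and> y = b then 1 else 0)"
      using K[OF E F0] by blast
    have "(\<alpha> has_sum \<alpha> a) E"
      by (rule L2) (use ab hK[OF E F0 ab(1,2) _ ab(2) ab(3)] in \<open>auto simp: \<alpha>_def\<close>)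
    moreover have "\<alpha> a = 1" using hK[OF E F0 ab(1,2) ab(1) ab(2) ab(3)] by (simp add: \<alpha>_def)
    ultimately show ?thesis by simp
  qed
  then have DA: "dispersion_free \<A> \<alpha>"
    unfolding dispersion_free_def prob_weight_def \<alpha>_def by auto
  have "(\<beta> has_sum 1) F" if F: "F \<in> \<B>" for F
  proof -
    obtain a b where ab: "a \<in> E0" "b \<in> F" "\<forall>x\<in>E0. \<forall>y\<in>F. \<omega> (x,y) = (if x = a \<and> y = b then 1 else 0)"
      using K[OF E0 F] by blast
    have "(\<beta> has_sum \<beta> b) F"
      by (rule L2) (use ab hK[OF E0 F ab(1,2) ab(1) _ ab(3)] in \<open>auto simp: \<beta>_def\<close>)
    moreover have "\<beta> b = 1" using hK[OF E0 F ab(1,2) ab(1) ab(2) ab(3)] by (simp add: \<beta>_def)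
    ultimately show ?thesis by simp
  qed
  then have DB: "dispersion_free \<B> \<beta>"
    unfolding dispersion_free_def prob_weight_def \<beta>_def by auto
  have "\<omega> (x, y) = \<alpha> x * \<beta> y" if x: "x \<in> outcomes \<A>" and y: "y \<in> outcomes \<B>" for x y
  proof -
    obtain E where E: "E \<in> \<A>" "x \<in> E" using x unfolding outcomes_def by blast
    obtain F where F: "F \<in> \<B>" "y \<in> F" using y unfolding outcomes_def by blast
    obtain a b where ab: "a \<in> E" "b \<in> F" "\<forall>x\<in>E. \<forall>y\<in>F. \<omega> (x,y) = (if x = a \<and> y = b then 1 else 0)"
      using K[OF E(1) F(1)] by blast
    have "\<alpha> x = (if x = a then 1 else 0)"
      using Hx[OF E(1,2) F(1)] hK[OF E(1) F(1) ab(1,2) E(2) F(2) ab(3)] by (simp add: \<alpha>_def)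
    moreover have "\<beta> y = (if y = b then 1 else 0)"
      using Hy[OF E(1) F(2,1)] hK[OF E(1) F(1) ab(1,2) E(2) F(2) ab(3)] by (simp add: \<beta>_def)
    ultimately show ?thesis using ab E F by auto
  qed
  with DA DB show ?thesis by blast
qed

end
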